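(* Let $T>0$ and let $f:\Omega\times[0,T]\times\mathbb{R}\times\mathbb{R}^d\to\mathbb{R}$ satisfy: for every $(y,z)$, $f(\cdot,y,z)\in L^2_{\mathcal{F}}(0,T)$, and there is $\mu>0$ with $|f(t,y,z)-f(t,\bar y,\bar z)|\le\mu(|y-\bar y|+|z-\bar z|)$ for all $y,\bar y\in\mathbb{R}$, $z,\bar z\in\mathbb{R}^d$. For $(t,y,z)\in[0,T]\times\mathbb{R}\times\mathbb{R}^d$ let $(Y^{t,y,z}_s)_{s\in[t,T]}$ be the solution of $Y^{t,y,z}_s=y-\int_t^s f(r,Y^{t,y,z}_r,z)\,dr+z\cdot(B_s-B_t)$, $s\in[t,T]$. Suppose that for each $(t,y,z)\in[0,T]\times\mathbb{R}\times\mathbb{R}^d$, $f(\omega,r,Y^{t,y,z}_r,z)\ge 0$ (resp. $=0$) for $dr\times dP$-a.e. $(r,\omega)\in[t,T]\times\Omega$. Then for each $(y,z)\in\mathbb{R}\times\mathbb{R}^d$, $f(\omega,t,y,z)\ge0$ (resp. $=0$) for $dt\times dP$-a.e. $(t,\omega)\in[0,T]\times\Omega$.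
   Context: Let $(\Omega,\mathcal{F},P)$ be a probability space carrying a $d$-dimensional Brownian motion $(B_t)_{t\ge0}$, and let $\mathcal{F}_t=\sigma\{B_s, s\le t\}$ be its natural filtration. $L^2_{\mathcal{F}}(0,T)$ denotes the space of $(\mathcal{F}_t)$-adapted real processes $\phi$ with $E\int_0^T|\phi_s|^2ds<\infty$. *)

theory Defs
  imports "HOL-Probability.Probability"
begin

definition brownian_motion :: "'a measure \<Rightarrow> (real \<Rightarrow> 'a \<Rightarrow> real^'d::finite) \<Rightarrow> bool" where
  "brownian_motion M B \<longleftrightarrow>
     prob_space M \<and>
     (\<forall>t\<ge>0. B t \<in> borel_measurable M) \<and>
     (\<forall>\<omega>\<in>space M. B 0 \<omega> = 0 \<and> continuous_on {0..} (\<lambda>t. B t \<omega>)) \<and>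
     (\<forall>s t. 0 \<le> s \<and> s < t \<longrightarrow>
        distr M borel (\<lambda>\<omega>. B t \<omega> - B s \<omega>) =
        density lborel (\<lambda>x. ennreal (\<Prod>i\<in>UNIV. normal_density 0 (sqrt (t - s)) (x $ i)))) \<and>
     (\<forall>(n::nat) ts. 0 \<le> ts 0 \<and> (\<forall>i<n. ts i < ts (Suc i)) \<longrightarrow>
        prob_space.indep_vars M (\<lambda>_. borel) (\<lambda>i \<omega>. B (ts (Suc i)) \<omega> - B (ts i) \<omega>) {..<n})"

definition nat_filt :: "'a measure \<Rightarrow> (real \<Rightarrow> 'a \<Rightarrow> real^'d::finite) \<Rightarrow> real \<Rightarrow> 'a measure" where
  "nat_filt M B t = sigma (space M)
     {B r -` A \<inter> space M | r A. 0 \<le> r \<and> r \<le> t \<and> A \<in> sets borel}"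

definition L2F :: "'a measure \<Rightarrow> (real \<Rightarrow> 'a \<Rightarrow> real^'d::finite) \<Rightarrow> real \<Rightarrow> (real \<Rightarrow> 'a \<Rightarrow> real) \<Rightarrow> bool" where
  "L2F M B T \<phi> \<longleftrightarrow>
     (\<lambda>(t,\<omega>). \<phi> t \<omega>) \<in> borel_measurable (restrict_space lborel {0..T} \<Otimes>\<^sub>M M) \<and>
     (\<forall>t\<in>{0..T}. \<phi> t \<in> borel_measurable (nat_filt M B t)) \<and>
     integrable (restrict_space lborel {0..T} \<Otimes>\<^sub>M M) (\<lambda>(t,\<omega>). (\<phi> t \<omega>)\<^sup>2)"

definition is_solution ::
  "'a measure \<Rightarrow> (real \<Rightarrow> 'a \<Rightarrow> real^'d::finite) \<Rightarrow> ('a \<Rightarrow> real \<Rightarrow> real \<Rightarrow> real^'d \<Rightarrow> real)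
    \<Rightarrow> real \<Rightarrow> real \<Rightarrow> real \<Rightarrow> real^'d \<Rightarrow> (real \<Rightarrow> 'a \<Rightarrow> real) \<Rightarrow> bool" where
  "is_solution M B f T t y z Y \<longleftrightarrow>
     (AE \<omega> in M. set_integrable lborel {t..T} (\<lambda>r. f \<omega> r (Y r \<omega>) z) \<and>
        (\<forall>s\<in>{t..T}. Y s \<omega> = y - (LINT r:{t..s}|lborel. f \<omega> r (Y r \<omega>) z) + z \<bullet> (B s \<omega> - B t \<omega>)))"

end

theory Submission
  imports Defs
begin

lemma pathwise:
  fixes b :: "real \<Rightarrow> real^'d::finite" and h Yp :: "real \<Rightarrow> real \<Rightarrow> real"
  assumes contb: "continuous_on {0..T} b" and mu: "\<mu> > 0"
    and Q: "Q \<subseteq> {0..T}" "0 \<in> Q"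
    and dense: "\<And>\<delta>. \<delta> > 0 \<Longrightarrow> \<exists>t\<in>Q. r - \<delta> < t \<and> t < r"
    and int: "\<And>t. t \<in> Q \<Longrightarrow> set_integrable lborel {t..T} (h t)"
    and eq: "\<And>t s. t \<in> Q \<Longrightarrow> s \<in> {t..T} \<Longrightarrow>
               Yp t s = y - (LINT u:{t..s}|lborel. h t u) + z \<bullet> (b s - b t)"
    and lip: "\<And>t u. t \<in> Q \<Longrightarrow> u \<in> {t..T} \<Longrightarrow> \<bar>h t u - h 0 u\<bar> \<le> \<mu> * \<bar>Yp t u - Yp 0 u\<bar>"
    and r: "0 < r" "r \<le> T" and e: "\<epsilon> > 0"
  shows "\<exists>t\<in>Q. t \<le> r \<and> \<bar>Yp t r - y\<bar> \<le> \<epsilon>"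
proof -
  have intI: "h t integrable_on {t..s} \<and> (LINT u:{t..s}|lborel. h t u) = integral {t..s} (h t)"
    if "t \<in> Q" "t \<le> s" "s \<le> T" for t s
  proof -
    have "set_integrable lborel {t..s} (h t)"
      using that by (intro set_integrable_subset[OF int[OF that(1)]]) auto
    then show ?thesis using set_borel_integral_eq_integral by blast
  qed
  have absI: "(\<lambda>u. \<bar>h t u\<bar>) integrable_on {t..T}" if "t \<in> Q" for t
    using set_borel_integral_eq_integral(1)[OF set_integrable_abs[OF int[OF that]]] .
  have bound: "\<bar>Yp t s - y\<bar> \<le> \<bar>integral {t..s} (h t)\<bar> + norm z * norm (b s - b t)"
    if "t \<in> Q" "t \<le> s" "s \<le> T" for t s
  proof -
    have "Yp t s - y = - integral {t..s} (h t) + z \<bullet> (b s - b t)"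
      using eq[of t s] intI[OF that] that by auto
    moreover have "\<bar>z \<bullet> (b s - b t)\<bar> \<le> norm z * norm (b s - b t)" by (rule Cauchy_Schwarz_ineq2)
    ultimately show ?thesis by linarith
  qed
  have intmono: "\<bar>integral {t..s} (h t)\<bar> \<le> integral {t..s'} (\<lambda>u. \<bar>h t u\<bar>)"
    if "t \<in> Q" "t \<le> s" "s \<le> s'" "s' \<le> T" for t s s'
  proof -
    have i1: "(\<lambda>u. \<bar>h t u\<bar>) integrable_on {t..s}"
      using integrable_on_subinterval[OF absI[OF that(1)]] that by auto
    have i2: "(\<lambda>u. \<bar>h t u\<bar>) integrable_on {t..s'}"
      using integrable_on_subinterval[OF absI[OF that(1)]] that by auto
    have "\<bar>integral {t..s} (h t)\<bar> \<le> integral {t..s} (\<lambda>u. \<bar>h t u\<bar>)"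
      using integral_norm_bound_integral[OF conjunct1[OF intI[of t s]] i1] that by auto
    also have "\<dots> \<le> integral {t..s'} (\<lambda>u. \<bar>h t u\<bar>)"
      by (rule integral_subset_le) (use that i1 i2 in auto)
    finally show ?thesis .
  qed
  obtain K where K: "K > 0" "\<And>s. s \<in> {0..T} \<Longrightarrow> norm (b s) \<le> K"
    using compact_imp_bounded[OF compact_continuous_image[OF contb compact_Icc]]
    unfolding bounded_pos by auto
  have bdiff: "norm (b s - b t) \<le> 2 * K" if "s \<in> {0..T}" "t \<in> {0..T}" for s t
    using K(2)[OF that(1)] K(2)[OF that(2)] norm_triangle_ineq4[of "b s" "b t"] by linarith
  define g0 where "g0 = (\<lambda>u. \<bar>h 0 u\<bar>)"
  have g0i: "g0 integrable_on {0..T}" using absI[OF Q(2)] unfolding g0_def .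
  have g0nn: "g0 u \<ge> 0" for u unfolding g0_def by simp
  define C0 where "C0 = integral {0..T} g0 + norm z * (2*K)"
  have C0: "\<bar>Yp 0 s - y\<bar> \<le> C0" if "s \<in> {0..T}" for s
  proof -
    have "\<bar>Yp 0 s - y\<bar> \<le> \<bar>integral {0..s} (h 0)\<bar> + norm z * norm (b s - b 0)"
      using bound[OF Q(2)] that by auto
    also have "\<dots> \<le> integral {0..T} g0 + norm z * (2*K)"
      using intmono[OF Q(2), of s T] that bdiff[OF that, of 0] unfolding g0_def
      by (intro add_mono mult_left_mono) auto
    finally show ?thesis unfolding C0_def .
  qed
  have C0pos: "C0 \<ge> 0"
    using integral_nonneg[OF g0i g0nn] K(1) unfolding C0_def by simp
  define e' where "e' = \<epsilon>/6"
  have e': "e' > 0" using e unfolding e'_def by simp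
  obtain d1 where d1: "d1 > 0"
    "\<forall>t. r - d1 < t \<and> t \<le> r \<longrightarrow> norm (integral {0..r} g0 - integral {0..t} g0) < e'"
    using indefinite_integral_continuous_left[OF g0i r(1) r(2) e'] by blast
  define \<eta> where "\<eta> = e' / (2 * (norm z + 1))"
  have \<eta>: "\<eta> > 0" using e' unfolding \<eta>_def
    by (intro divide_pos_pos) (auto intro: add_nonneg_pos)
  obtain d2 where d2: "d2 > 0" "\<forall>s\<in>{0..T}. dist s r < d2 \<longrightarrow> dist (b s) (b r) < \<eta>"
    using contb r \<eta> unfolding continuous_on_iff by (metis atLeastAtMost_iff less_eq_real_def)
  define d3 where "d3 = min (1/(2*\<mu>)) (e'/(\<mu>*(C0+1)))"
  have d3: "d3 > 0" using mu e' C0pos unfolding d3_def by simp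
  obtain t where t: "t \<in> Q" "r - min d1 (min d2 d3) < t" "t < r"
    using dense[of "min d1 (min d2 d3)"] d1 d2 d3 by auto
  have t0: "0 \<le> t" using t Q by auto
  have smallI: "integral {t..r} g0 < e'"
  proof -
    have "g0 integrable_on {0..r}" using integrable_on_subinterval[OF g0i] r by auto
    then have "integral {0..t} g0 + integral {t..r} g0 = integral {0..r} g0"
      using Henstock_Kurzweil_Integration.integral_combine[where a=0 and c=t and b=r and f=g0] t t0 by auto
    moreover have "norm (integral {0..r} g0 - integral {0..t} g0) < e'" using d1(2) t by auto
    ultimately show ?thesis by auto
  qed
  have smallB: "norm z * norm (b s - b t) \<le> e'" if "s \<in> {t..r}" for s
  proof -
    have "dist (b s) (b r) < \<eta>" using d2(2) that t t0 r by (auto simp: dist_real_def)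
    moreover have "dist (b t) (b r) < \<eta>" using d2(2) that t t0 r by (auto simp: dist_real_def)
    ultimately have "norm (b s - b t) \<le> 2 * \<eta>"
      using dist_triangle3[of "b s" "b t" "b r"] by (simp add: dist_norm norm_minus_commute)
    then have "norm z * norm (b s - b t) \<le> norm z * (2 * \<eta>)" by (simp add: mult_left_mono)
    also have "\<dots> = e' * (norm z / (norm z + 1))" unfolding \<eta>_def
    proof -
      have "norm z + 1 > 0" by (simp add: add_nonneg_pos)
      then show "norm z * (2 * (e' / (2 * (norm z + 1)))) = e' * (norm z / (norm z + 1))"
        by (simp add: field_simps)
    qed
    also have "\<dots> \<le> e' * 1" using e'
      by (intro mult_left_mono) (auto simp: divide_le_eq_1 add_nonneg_pos)
    finally show ?thesis by simp
  qed
  have sm1: "\<mu> * (r - t) \<le> 1/2"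
  proof -
    have "r - t < 1/(2*\<mu>)" using t unfolding d3_def by auto
    then have "\<mu> * (r - t) < \<mu> * (1/(2*\<mu>))" using mu by (intro mult_strict_left_mono) auto
    then show ?thesis using mu by simp
  qed
  have sm2: "\<mu> * (r - t) * C0 \<le> e'"
  proof -
    have "r - t < e'/(\<mu>*(C0+1))" using t unfolding d3_def by auto
    then have "(r - t) * (\<mu>*(C0+1)) < e'" using mu C0pos by (simp add: pos_less_divide_eq)
    moreover have "\<mu> * (r - t) * C0 \<le> (r - t) * (\<mu>*(C0+1))" using mu t by (simp add: algebra_simps)
    ultimately show ?thesis by linarith
  qed
  define D where "D = (\<lambda>s. \<bar>Yp t s - y\<bar>)"
  have Dbd: "bdd_above (D ` {t..r})"
  proof (rule bdd_aboveI2)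
    fix s assume s: "s \<in> {t..r}"
    have "D s \<le> \<bar>integral {t..s} (h t)\<bar> + norm z * norm (b s - b t)"
      unfolding D_def using bound[OF t(1)] s r by auto
    also have "\<dots> \<le> integral {t..T} (\<lambda>u. \<bar>h t u\<bar>) + norm z * (2*K)"
      using intmono[OF t(1), of s T] s r t0 bdiff[of s t] by (intro add_mono mult_left_mono) auto
    finally show "D s \<le> integral {t..T} (\<lambda>u. \<bar>h t u\<bar>) + norm z * (2*K)" .
  qed
  define MD where "MD = Sup (D ` {t..r})"
  have DM: "D s \<le> MD" if "s \<in> {t..r}" for s
    unfolding MD_def using that Dbd by (intro cSup_upper) auto
  have MD0: "MD \<ge> 0" using DM[of t] t unfolding D_def by force
  have key: "D s \<le> 3*e' + MD/2" if s: "s \<in> {t..r}" for s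
  proof -
    have hb: "\<bar>h t u\<bar> \<le> g0 u + \<mu> * (MD + C0)" if u: "u \<in> {t..s}" for u
    proof -
      have "\<bar>h t u - h 0 u\<bar> \<le> \<mu> * \<bar>Yp t u - Yp 0 u\<bar>" using lip[OF t(1)] u s r by auto
      also have "\<dots> \<le> \<mu> * (D u + \<bar>Yp 0 u - y\<bar>)" unfolding D_def using mu
        by (intro mult_left_mono) auto
      also have "\<dots> \<le> \<mu> * (MD + C0)" using DM[of u] C0[of u] u s r t0 mu
        by (intro mult_left_mono add_mono) auto
      finally show ?thesis unfolding g0_def by linarith
    qed
    have gi: "g0 integrable_on {t..s}" using integrable_on_subinterval[OF g0i] s t0 r by auto
    have gi': "g0 integrable_on {t..r}" using integrable_on_subinterval[OF g0i] s t0 r by auto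
    have gci: "(\<lambda>u. g0 u + \<mu> * (MD + C0)) integrable_on {t..s}"
      using gi by (intro Henstock_Kurzweil_Integration.integrable_add) auto
    have "\<bar>integral {t..s} (h t)\<bar> \<le> integral {t..s} (\<lambda>u. g0 u + \<mu> * (MD + C0))"
      using integral_norm_bound_integral[OF conjunct1[OF intI[OF t(1)]] gci] s r hb by auto
    also have "\<dots> = integral {t..s} g0 + \<mu> * (MD + C0) * (s - t)"
      using gi s by (subst Henstock_Kurzweil_Integration.integral_add) auto
    also have "\<dots> \<le> integral {t..r} g0 + \<mu> * (MD + C0) * (r - t)"
      using s gi gi' g0nn mu MD0 C0pos
      by (intro add_mono integral_subset_le mult_left_mono) auto
    also have "\<dots> \<le> e' + (MD/2 + e')"
    proof -
      have "\<mu> * (MD + C0) * (r - t) = MD * (\<mu> * (r - t)) + \<mu> * (r - t) * C0"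
        by (simp add: algebra_simps)
      also have "\<dots> \<le> MD * (1/2) + e'" using sm1 sm2 MD0 by (intro add_mono mult_left_mono) auto
      finally show ?thesis using smallI by linarith
    qed
    finally have "\<bar>integral {t..s} (h t)\<bar> \<le> 2*e' + MD/2" by simp
    moreover have "D s \<le> \<bar>integral {t..s} (h t)\<bar> + norm z * norm (b s - b t)"
      unfolding D_def using bound[OF t(1)] s r by auto
    ultimately show ?thesis using smallB[OF s] by linarith
  qed
  have "Sup (D ` {t..r}) \<le> 3*e' + MD/2"
    using t key by (intro cSup_least) auto
  then have "MD \<le> 3*e' + MD/2" unfolding MD_def .
  then have "MD \<le> \<epsilon>" unfolding e'_def by simp
  then have "\<bar>Yp t r - y\<bar> \<le> \<epsilon>" using DM[of r] t unfolding D_def by auto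
  then show ?thesis using t less_imp_le by blast
qed


lemma (in pair_sigma_finite) AE_pair_swap_any:
  assumes "AE p in M1 \<Otimes>\<^sub>M M2. P p"
  shows "AE y in M2. AE x in M1. P (x, y)"
proof -
  from assms obtain N where N: "{p \<in> space (M1 \<Otimes>\<^sub>M M2). \<not> P p} \<subseteq> N"
    "emeasure (M1 \<Otimes>\<^sub>M M2) N = 0" "N \<in> sets (M1 \<Otimes>\<^sub>M M2)"
    by (rule AE_E)
  have "AE p in M1 \<Otimes>\<^sub>M M2. p \<notin> N" using N by (intro AE_not_in) auto
  then have "AE x in M1. AE y in M2. (x, y) \<notin> N" by (rule AE_pair)
  moreover have "{x \<in> space (M1 \<Otimes>\<^sub>M M2). (fst x, snd x) \<notin> N} \<in> sets (M1 \<Otimes>\<^sub>M M2)"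
  proof -
    have "{x \<in> space (M1 \<Otimes>\<^sub>M M2). (fst x, snd x) \<notin> N} = space (M1 \<Otimes>\<^sub>M M2) - N" by auto
    then show ?thesis using N(3) by auto
  qed
  ultimately have "AE y in M2. AE x in M1. (x, y) \<notin> N"
    using AE_commute[of "\<lambda>x y. (x, y) \<notin> N"] by simp
  then show ?thesis
  proof (rule AE_mp[OF _ AE_I2], intro impI)
    fix y assume y: "y \<in> space M2" and "AE x in M1. (x, y) \<notin> N"
    from this(2) show "AE x in M1. P (x, y)"
    proof (rule AE_mp[OF _ AE_I2], intro impI)
      fix x assume "x \<in> space M1" "(x, y) \<notin> N"
      then show "P (x, y)" using N(1) y by (auto simp: space_pair_measure)
    qed
  qed
qed

lemma core:
  fixes M :: "'a measure" and B :: "real \<Rightarrow> 'a \<Rightarrow> real^'d::finite"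
    and f :: "'a \<Rightarrow> real \<Rightarrow> real \<Rightarrow> real^'d \<Rightarrow> real"
    and Y :: "real \<Rightarrow> real \<Rightarrow> real^'d \<Rightarrow> real \<Rightarrow> 'a \<Rightarrow> real"
    and T \<mu> :: real
  assumes BM: "brownian_motion M B"
    and mu: "\<mu> > 0"
    and Lip: "\<And>\<omega> t y y' z z'. \<omega> \<in> space M \<Longrightarrow> t \<in> {0..T} \<Longrightarrow>
               \<bar>f \<omega> t y z - f \<omega> t y' z'\<bar> \<le> \<mu> * (\<bar>y - y'\<bar> + norm (z - z'))"
    and sol: "\<And>t y z. t \<in> {0..T} \<Longrightarrow> is_solution M B f T t y z (Y t y z)"
    and hyp: "\<And>t. t \<in> {0..T} \<Longrightarrow> AE p in (restrict_space lborel {t..T} \<Otimes>\<^sub>M M).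
              R (f (snd p) (fst p) (Y t y z (fst p) (snd p)) z)"
  shows "AE \<omega> in M. AE r in lborel. r \<in> {0<..T} \<longrightarrow>
           (\<forall>\<epsilon>>0. \<exists>v. R v \<and> \<bar>f \<omega> r y z - v\<bar> \<le> \<mu> * \<epsilon>)"
proof -
  interpret prob_space M using BM unfolding brownian_motion_def by auto
  define Q where "Q = {0..T} \<inter> \<rat>"
  have cQ: "countable Q" unfolding Q_def by (rule countable_subset[OF _ countable_rat]) auto
  have A1: "AE \<omega> in M. \<forall>t\<in>Q. set_integrable lborel {t..T} (\<lambda>r. f \<omega> r (Y t y z r \<omega>) z) \<and>
        (\<forall>s\<in>{t..T}. Y t y z s \<omega> = y - (LINT r:{t..s}|lborel. f \<omega> r (Y t y z r \<omega>) z) + z \<bullet> (B s \<omega> - B t \<omega>))"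
    using sol unfolding is_solution_def Q_def by (subst AE_ball_countable[OF cQ[unfolded Q_def]]) auto
  have A2: "AE \<omega> in M. \<forall>t\<in>Q. AE r in lborel. r \<in> {t..T} \<longrightarrow> R (f \<omega> r (Y t y z r \<omega>) z)"
  proof (subst AE_ball_countable[OF cQ], intro ballI)
    fix t assume "t \<in> Q"
    then have t: "t \<in> {0..T}" unfolding Q_def by auto
    interpret L: sigma_finite_measure "restrict_space lborel {t..T}"
      by (intro sigma_finite_measure_restrict_space) (auto simp: sigma_finite_lborel)
    interpret P: pair_sigma_finite "restrict_space lborel {t..T}" M
      unfolding pair_sigma_finite_def by (auto intro: L.sigma_finite_measure_axioms sigma_finite_measure_axioms)
    have "AE \<omega> in M. AE r in restrict_space lborel {t..T}. R (f \<omega> r (Y t y z r \<omega>) z)"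
      using P.AE_pair_swap_any[OF hyp[OF t]] by simp
    then show "AE \<omega> in M. AE r in lborel. r \<in> {t..T} \<longrightarrow> R (f \<omega> r (Y t y z r \<omega>) z)"
      by (subst (asm) AE_restrict_space_iff) auto
  qed
  have A3: "AE \<omega> in M. continuous_on {0..T} (\<lambda>s. B s \<omega>)"
    using BM unfolding brownian_motion_def
    by (intro AE_I2) (auto intro: continuous_on_subset)
  from A1 A2 A3 AE_space show ?thesis
  proof eventually_elim
    case (elim \<omega>)
    have "AE r in lborel. \<forall>t\<in>Q. r \<in> {t..T} \<longrightarrow> R (f \<omega> r (Y t y z r \<omega>) z)"
      using elim(2) by (subst AE_ball_countable[OF cQ])
    then show ?case
    proof (rule AE_mp[OF _ AE_I2], intro impI allI)
      fix r \<epsilon> :: real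
      assume H: "\<forall>t\<in>Q. r \<in> {t..T} \<longrightarrow> R (f \<omega> r (Y t y z r \<omega>) z)" and r: "r \<in> {0<..T}"
      assume e: "0 < \<epsilon>"
      show "\<exists>v. R v \<and> \<bar>f \<omega> r y z - v\<bar> \<le> \<mu> * \<epsilon>"
      proof -
        have Q: "Q \<subseteq> {0..T}" "0 \<in> Q" using r unfolding Q_def by auto
        have dense: "\<exists>t\<in>Q. r - \<delta> < t \<and> t < r" if dpos: "\<delta> > 0" for \<delta>
        proof -
          obtain q where q: "q \<in> \<rat>" "max 0 (r - \<delta>) < q" "q < r"
          proof -
            have "max 0 (r - \<delta>) < r" using r dpos by auto
            then show ?thesis using Rats_dense_in_real[of "max 0 (r - \<delta>)" r] that by blast
          qed
          then show ?thesis using r unfolding Q_def by (intro bexI[of _ q]) auto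
        qed
        have "\<exists>t\<in>Q. t \<le> r \<and> \<bar>Y t y z r \<omega> - y\<bar> \<le> \<epsilon>"
        proof (rule pathwise[where b="\<lambda>s. B s \<omega>" and h="\<lambda>t u. f \<omega> u (Y t y z u \<omega>) z"
                and Yp="\<lambda>t s. Y t y z s \<omega>" and y=y and z=z and \<mu>=\<mu> and T=T and Q=Q and r=r and \<epsilon>=\<epsilon>,
               OF elim(3) mu Q dense _ _ _ _ _ e])
          show "\<And>t. t \<in> Q \<Longrightarrow> set_integrable lborel {t..T} (\<lambda>u. f \<omega> u (Y t y z u \<omega>) z)"
            using elim(1) by auto
          show "\<And>t s. t \<in> Q \<Longrightarrow> s \<in> {t..T} \<Longrightarrow> Y t y z s \<omega> = y - (LINT u:{t..s}|lborel. f \<omega> u (Y t y z u \<omega>) z) + z \<bullet> (B s \<omega> - B t \<omega>)"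
            using elim(1) by auto
          show "\<bar>f \<omega> u (Y t y z u \<omega>) z - f \<omega> u (Y 0 y z u \<omega>) z\<bar> \<le> \<mu> * \<bar>Y t y z u \<omega> - Y 0 y z u \<omega>\<bar>"
            if "t \<in> Q" "u \<in> {t..T}" for t u
            using Lip[OF elim(4), where t=u and y="Y t y z u \<omega>" and y'="Y 0 y z u \<omega>" and z=z and z'=z] that Q by auto
          show "0 < r" "r \<le> T" using r by auto
        qed
        then obtain t where t: "t \<in> Q" "t \<le> r" "\<bar>Y t y z r \<omega> - y\<bar> \<le> \<epsilon>" by blast
        have "R (f \<omega> r (Y t y z r \<omega>) z)" using H t r by auto
        moreover have "\<bar>f \<omega> r y z - f \<omega> r (Y t y z r \<omega>) z\<bar> \<le> \<mu> * \<epsilon>"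
        proof -
          have "\<bar>f \<omega> r y z - f \<omega> r (Y t y z r \<omega>) z\<bar> \<le> \<mu> * (\<bar>y - Y t y z r \<omega>\<bar> + norm (z - z))"
            using Lip[OF elim(4), where t=r and y=y and y'="Y t y z r \<omega>" and z=z and z'=z] r by auto
          also have "\<dots> \<le> \<mu> * \<epsilon>" using t(3) mu by (intro mult_left_mono) auto
          finally show ?thesis .
        qed
        ultimately show "\<exists>v. R v \<and> \<bar>f \<omega> r y z - v\<bar> \<le> \<mu> * \<epsilon>" by blast
      qed
    qed
  qed
qed

lemma to_prod:
  fixes M :: "'a measure" and g :: "real \<Rightarrow> 'a \<Rightarrow> real"
  assumes "prob_space M"
    and S: "{p \<in> space (restrict_space lborel {0..T} \<Otimes>\<^sub>M M). S (g (fst p) (snd p))}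
              \<in> sets (restrict_space lborel {0..T} \<Otimes>\<^sub>M M)"
    and ae: "AE \<omega> in M. AE r in lborel. r \<in> {0<..T} \<longrightarrow> S (g r \<omega>)"
  shows "AE p in (restrict_space lborel {0..T} \<Otimes>\<^sub>M M). S (g (fst p) (snd p))"
proof -
  interpret prob_space M by fact
  interpret L: sigma_finite_measure "restrict_space lborel {0..T}"
    by (intro sigma_finite_measure_restrict_space) (auto simp: sigma_finite_lborel)
  interpret P: pair_sigma_finite "restrict_space lborel {0..T}" M
    unfolding pair_sigma_finite_def by (auto intro: L.sigma_finite_measure_axioms sigma_finite_measure_axioms)
  have "AE \<omega> in M. AE r in restrict_space lborel {0..T}. S (g r \<omega>)"
    using ae
  proof eventually_elim
    case (elim \<omega>)
    have "AE r in lborel. r \<noteq> 0" by (intro AE_not_in[of "{0}", simplified]) auto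
    with elim have "AE r in lborel. r \<in> {0..T} \<longrightarrow> S (g r \<omega>)" by eventually_elim auto
    then show ?case by (subst AE_restrict_space_iff) auto
  qed
  then have "AE r in restrict_space lborel {0..T}. AE \<omega> in M. S (g r \<omega>)"
    using P.AE_commute[of "\<lambda>r \<omega>. S (g r \<omega>)", OF S] by simp
  then show ?thesis using P.AE_pair_iff[of "\<lambda>r \<omega>. S (g r \<omega>)", OF S] by simp
qed

theorem lemma4p4:
  fixes M :: "'a measure" and B :: "real \<Rightarrow> 'a \<Rightarrow> real^'d::finite"
    and f :: "'a \<Rightarrow> real \<Rightarrow> real \<Rightarrow> real^'d \<Rightarrow> real"
    and Y :: "real \<Rightarrow> real \<Rightarrow> real^'d \<Rightarrow> real \<Rightarrow> 'a \<Rightarrow> real"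
    and T \<mu> :: real
  assumes BM: "brownian_motion M B"
    and T: "T > 0"
    and L2: "\<And>y z. L2F M B T (\<lambda>t \<omega>. f \<omega> t y z)"
    and mu: "\<mu> > 0"
    and Lip: "\<And>\<omega> t y y' z z'. \<omega> \<in> space M \<Longrightarrow> t \<in> {0..T} \<Longrightarrow>
               \<bar>f \<omega> t y z - f \<omega> t y' z'\<bar> \<le> \<mu> * (\<bar>y - y'\<bar> + norm (z - z'))"
    and sol: "\<And>t y z. t \<in> {0..T} \<Longrightarrow> is_solution M B f T t y z (Y t y z)"
  shows "((\<forall>t\<in>{0..T}. \<forall>y z. AE p in (restrict_space lborel {t..T} \<Otimes>\<^sub>M M).
              f (snd p) (fst p) (Y t y z (fst p) (snd p)) z \<ge> 0)
         \<longrightarrow> (\<forall>y z. AE p in (restrict_space lborel {0..T} \<Otimes>\<^sub>M M). f (snd p) (fst p) y z \<ge> 0)) \<and>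
         ((\<forall>t\<in>{0..T}. \<forall>y z. AE p in (restrict_space lborel {t..T} \<Otimes>\<^sub>M M).
              f (snd p) (fst p) (Y t y z (fst p) (snd p)) z = 0)
         \<longrightarrow> (\<forall>y z. AE p in (restrict_space lborel {0..T} \<Otimes>\<^sub>M M). f (snd p) (fst p) y z = 0))"
proof -
  have pM: "prob_space M" using BM unfolding brownian_motion_def by auto
  have meas: "(\<lambda>p. f (snd p) (fst p) y z) \<in> borel_measurable (restrict_space lborel {0..T} \<Otimes>\<^sub>M M)" for y z
    using L2[of y z] unfolding L2F_def by (simp add: case_prod_beta')
  have setm: "{p \<in> space (restrict_space lborel {0..T} \<Otimes>\<^sub>M M). f (snd p) (fst p) y z \<in> A}
      \<in> sets (restrict_space lborel {0..T} \<Otimes>\<^sub>M M)" if "A \<in> sets borel" for y z A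
  proof -
    have "{p \<in> space (restrict_space lborel {0..T} \<Otimes>\<^sub>M M). f (snd p) (fst p) y z \<in> A} =
       (\<lambda>p. f (snd p) (fst p) y z) -` A \<inter> space (restrict_space lborel {0..T} \<Otimes>\<^sub>M M)" by auto
    then show ?thesis using measurable_sets[OF meas that] by simp
  qed
  show ?thesis
  proof (intro conjI impI allI)
    fix y z
    assume H: "\<forall>t\<in>{0..T}. \<forall>y z. AE p in restrict_space lborel {t..T} \<Otimes>\<^sub>M M.
              0 \<le> f (snd p) (fst p) (Y t y z (fst p) (snd p)) z"
    have c: "AE \<omega> in M. AE r in lborel. r \<in> {0<..T} \<longrightarrow>
           (\<forall>\<epsilon>>0. \<exists>v. 0 \<le> v \<and> \<bar>f \<omega> r y z - v\<bar> \<le> \<mu> * \<epsilon>)"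
      by (rule core[OF BM mu Lip sol, where R="\<lambda>v. 0 \<le> v"]) (use H in auto)
    have "AE \<omega> in M. AE r in lborel. r \<in> {0<..T} \<longrightarrow> f \<omega> r y z \<in> {0..}"
      using c
    proof (eventually_elim, elim AE_mp, intro AE_I2 impI)
      fix \<omega> r
      assume h: "r \<in> {0<..T} \<longrightarrow> (\<forall>\<epsilon>>0. \<exists>v. 0 \<le> v \<and> \<bar>f \<omega> r y z - v\<bar> \<le> \<mu> * \<epsilon>)" "r \<in> {0<..T}"
      show "f \<omega> r y z \<in> {0..}"
      proof (rule ccontr)
        assume "f \<omega> r y z \<notin> {0..}"
        then have neg: "f \<omega> r y z < 0" by auto
        obtain v where "0 \<le> v" "\<bar>f \<omega> r y z - v\<bar> \<le> \<mu> * (- f \<omega> r y z / (2*\<mu>))"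
          using h neg mu by (meson divide_pos_pos mult_pos_pos neg_0_less_iff_less zero_less_numeral)
        moreover have "\<mu> * (- f \<omega> r y z / (2*\<mu>)) = - f \<omega> r y z / 2" using mu by simp
        ultimately show False using neg by linarith
      qed
    qed
    then show "AE p in restrict_space lborel {0..T} \<Otimes>\<^sub>M M. 0 \<le> f (snd p) (fst p) y z"
      using to_prod[where g="\<lambda>r \<omega>. f \<omega> r y z" and S="\<lambda>x. x \<in> {0..}", OF pM] setm[of "{0..}" y z] by simp
  next
    fix y z
    assume H: "\<forall>t\<in>{0..T}. \<forall>y z. AE p in restrict_space lborel {t..T} \<Otimes>\<^sub>M M.
              f (snd p) (fst p) (Y t y z (fst p) (snd p)) z = 0"
    have c: "AE \<omega> in M. AE r in lborel. r \<in> {0<..T} \<longrightarrow>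
           (\<forall>\<epsilon>>0. \<exists>v. v = 0 \<and> \<bar>f \<omega> r y z - v\<bar> \<le> \<mu> * \<epsilon>)"
      by (rule core[OF BM mu Lip sol, where R="\<lambda>v. v = 0"]) (use H in auto)
    have "AE \<omega> in M. AE r in lborel. r \<in> {0<..T} \<longrightarrow> f \<omega> r y z \<in> {0}"
      using c
    proof (eventually_elim, elim AE_mp, intro AE_I2 impI)
      fix \<omega> r
      assume h: "r \<in> {0<..T} \<longrightarrow> (\<forall>\<epsilon>>0. \<exists>v. v = 0 \<and> \<bar>f \<omega> r y z - v\<bar> \<le> \<mu> * \<epsilon>)" "r \<in> {0<..T}"
      show "f \<omega> r y z \<in> {0}"
      proof (rule ccontr)
        assume "f \<omega> r y z \<notin> {0}"
        then have nz: "\<bar>f \<omega> r y z\<bar> > 0" by auto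
        have "\<bar>f \<omega> r y z\<bar> \<le> \<mu> * (\<bar>f \<omega> r y z\<bar> / (2*\<mu>))"
          using h nz mu by (metis diff_zero divide_pos_pos mult_pos_pos zero_less_numeral)
        moreover have "\<mu> * (\<bar>f \<omega> r y z\<bar> / (2*\<mu>)) = \<bar>f \<omega> r y z\<bar> / 2" using mu by simp
        ultimately show False using nz by linarith
      qed
    qed
    then show "AE p in restrict_space lborel {0..T} \<Otimes>\<^sub>M M. f (snd p) (fst p) y z = 0"
      using to_prod[where g="\<lambda>r \<omega>. f \<omega> r y z" and S="\<lambda>x. x \<in> {0}", OF pM] setm[of "{0}" y z] by simp
  qed
qed

end
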